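(* For every class $\mathcal{G}$ of graphs of bounded shrub-depth and every positive integer $r$, there exists a positive integer $c$ such that every graph in $\mathcal{G}$ has a weak $r$-guidance system of maximum outdegree at most $c$.
   Context: All graphs are finite, simple and undirected. A partial orientation of $G$ is a directed graph $\vec{H}$ on $V(G)$ such that every $(u,v)\in E(\vec{H})$ satisfies $uv\in E(G)$ (each edge of $G$ may be directed in neither, one, or both directions). $B_{\vec{H}}(v,a)$ denotes the set of vertices reachable from $v$ by a directed path in $\vec{H}$ of length at most $a$. A weak $r$-guidance system of $G$ is a partial orientation $\vec{H}$ such that for any distinct vertices $u,v$ at distance $\ell\le r$ in $G$ there exist non-negative integers $a,b$ with $a+b=\ell-1$ such that $G$ contains an edge between $B_{\vec{H}}(u,a)$ and $B_{\vec{H}}(v,b)$. Shrub-depth: for a positive integer $m$, an $m$-signature is a function $S$ assigning to each positive integer $i$ a symmetric relation $S(i)\subseteq[m]\times[m]$. For a positive integer $d$, an $(m,d)$-tree model of a graph $G$ is a triple $(T,\varphi,S)$ where $T$ is a rooted tree with leaf set $V(G)$ in which every root-leaf path has length $d$, $\varphi:V(G)\to[m]$, $S$ is an $m$-signature, and for all $u,v\in V(G)$, if $2i$ is the distance between $u$ and $v$ in $T$ then $uv\in E(G)$ iff $(\varphi(u),\varphi(v))\in S(i)$. A class has shrub-depth at most $d$ if for some positive integer $m$ every graph in the class has an $(m,d)$-tree model; it has bounded shrub-depth if it has shrub-depth at most $d$ for some $d$. *)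

theory Defs
  imports Main
begin

type_synonym 'a graph = "'a set \<times> ('a \<times> 'a) set"

definition verts :: "'a graph \<Rightarrow> 'a set" where "verts G = fst G"
definition edges :: "'a graph \<Rightarrow> ('a \<times> 'a) set" where "edges G = snd G"

definition simple_graph :: "'a graph \<Rightarrow> bool" where
  "simple_graph G \<longleftrightarrow> finite (verts G) \<and> edges G \<subseteq> verts G \<times> verts G
     \<and> (\<forall>u v. (u, v) \<in> edges G \<longrightarrow> (v, u) \<in> edges G)
     \<and> (\<forall>u. (u, u) \<notin> edges G)"

definition graph_dist_is :: "'a graph \<Rightarrow> 'a \<Rightarrow> 'a \<Rightarrow> nat \<Rightarrow> bool" where
  "graph_dist_is G u v l \<longleftrightarrow> (u, v) \<in> (edges G) ^^ l \<and> (\<forall>k<l. (u, v) \<notin> (edges G) ^^ k)"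

text \<open>Partial orientation: a set of arcs, each arc along an edge of G
  (an edge may be oriented in neither, one, or both directions).\<close>
definition partial_orientation :: "'a graph \<Rightarrow> ('a \<times> 'a) set \<Rightarrow> bool" where
  "partial_orientation G H \<longleftrightarrow> H \<subseteq> edges G"

definition ball_out :: "('a \<times> 'a) set \<Rightarrow> 'a \<Rightarrow> nat \<Rightarrow> 'a set" where
  "ball_out H v a = {w. \<exists>k\<le>a. (v, w) \<in> H ^^ k}"

definition weak_guidance_system :: "'a graph \<Rightarrow> nat \<Rightarrow> ('a \<times> 'a) set \<Rightarrow> bool" where
  "weak_guidance_system G r H \<longleftrightarrow> partial_orientation G H \<and>
     (\<forall>u\<in>verts G. \<forall>v\<in>verts G. \<forall>l. u \<noteq> v \<and> l \<le> r \<and> graph_dist_is G u v l \<longrightarrow>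
        (\<exists>a b. a + b = l - 1 \<and>
           (\<exists>x\<in>ball_out H u a. \<exists>y\<in>ball_out H v b. (x, y) \<in> edges G)))"

definition max_outdegree_le :: "'a graph \<Rightarrow> ('a \<times> 'a) set \<Rightarrow> nat \<Rightarrow> bool" where
  "max_outdegree_le G H c \<longleftrightarrow> (\<forall>v\<in>verts G. card {w. (v, w) \<in> H} \<le> c)"

text \<open>A rooted tree T whose leaf set is V(G) and in which every
  root-leaf path has length d is encoded by its ancestor map: anc i v is
  (a label of) the ancestor of leaf v at height i, so anc 0 v is the leaf v
  itself (anc 0 injective on V), anc d is the root (constant), and leaves
  sharing the ancestor at height i share it at height i+1.  Every node of T lies
  on a root-leaf path, so T is determined by this data up to isomorphism.
  For distinct leaves u, v, the distance in T is 2i where i is the least height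
  with anc i u = anc i v.\<close>

definition tree_anc :: "'a set \<Rightarrow> nat \<Rightarrow> (nat \<Rightarrow> 'a \<Rightarrow> nat) \<Rightarrow> bool" where
  "tree_anc V d anc \<longleftrightarrow> inj_on (anc 0) V
     \<and> (\<forall>u\<in>V. \<forall>v\<in>V. anc d u = anc d v)
     \<and> (\<forall>i<d. \<forall>u\<in>V. \<forall>v\<in>V. anc i u = anc i v \<longrightarrow> anc (Suc i) u = anc (Suc i) v)"

definition tree_half_dist :: "(nat \<Rightarrow> 'a \<Rightarrow> nat) \<Rightarrow> 'a \<Rightarrow> 'a \<Rightarrow> nat" where
  "tree_half_dist anc u v = (LEAST i. anc i u = anc i v)"

definition signature :: "nat \<Rightarrow> (nat \<Rightarrow> (nat \<times> nat) set) \<Rightarrow> bool" where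
  "signature m S \<longleftrightarrow> (\<forall>i>0. S i \<subseteq> {1..m} \<times> {1..m} \<and> (\<forall>x y. (x, y) \<in> S i \<longrightarrow> (y, x) \<in> S i))"

definition has_tree_model :: "nat \<Rightarrow> nat \<Rightarrow> 'a graph \<Rightarrow> bool" where
  "has_tree_model m d G \<longleftrightarrow> (\<exists>anc \<phi> S.
     tree_anc (verts G) d anc \<and> (\<forall>v\<in>verts G. \<phi> v \<in> {1..m}) \<and> signature m S \<and>
     (\<forall>u\<in>verts G. \<forall>v\<in>verts G. u \<noteq> v \<longrightarrow>
        ((u, v) \<in> edges G \<longleftrightarrow> (\<phi> u, \<phi> v) \<in> S (tree_half_dist anc u v))))"

definition bounded_shrub_depth :: "'a graph set \<Rightarrow> bool" where
  "bounded_shrub_depth \<C> \<longleftrightarrow> (\<exists>d>0. \<exists>m>0. \<forall>G\<in>\<C>. has_tree_model m d G)"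

end

theory Submission
  imports Defs
begin

lemma relpow_mono_sub:
  fixes R :: "('a \<times> 'a) set"
  assumes "R \<subseteq> R'" shows "(a,b) \<in> R ^^ n \<Longrightarrow> (a,b) \<in> R' ^^ n"
proof (induction n arbitrary: b)
  case 0 then show ?case by simp
next
  case (Suc n)
  then obtain y where "(a,y) \<in> R ^^ n" "(y,b) \<in> R" by (auto elim: relpow_Suc_E)
  then show ?case using Suc.IH assms by (meson relpow_Suc_I subsetD)
qed

lemma relpow_sym:
  fixes R :: "('a \<times> 'a) set"
  assumes "\<And>x y. (x,y) \<in> R \<Longrightarrow> (y,x) \<in> R"
  shows "(a,b) \<in> R ^^ n \<Longrightarrow> (b,a) \<in> R ^^ n"
proof (induction n arbitrary: b)
  case 0 then show ?case by simp
next
  case (Suc n)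
  then obtain y where "(a,y) \<in> R ^^ n" "(y,b) \<in> R" by (auto elim: relpow_Suc_E)
  then show ?case using Suc.IH assms by (meson relpow_Suc_I2)
qed

lemma path_relpow:
  fixes R :: "('a \<times> 'a) set"
  assumes "\<And>i. p \<le> i \<Longrightarrow> i < q \<Longrightarrow> (f i, f (Suc i)) \<in> R" "p \<le> q"
  shows "(f p, f q) \<in> R ^^ (q - p)"
  using assms
proof (induction q)
  case 0 then show ?case by simp
next
  case (Suc q)
  show ?case
  proof (cases "p = Suc q")
    case True then show ?thesis by simp
  next
    case False
    then have "p \<le> q" using Suc.prems by simp
    then have "(f p, f q) \<in> R ^^ (q - p)" using Suc by simp
    moreover have "(f q, f (Suc q)) \<in> R" using Suc.prems \<open>p \<le> q\<close> by simp
    ultimately have "(f p, f (Suc q)) \<in> R ^^ Suc (q - p)" by (rule relpow_Suc_I)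
    then show ?thesis using \<open>p \<le> q\<close> by (simp add: Suc_diff_le)
  qed
qed

lemma ball_trans:
  fixes H :: "('a \<times> 'a) set"
  shows "a \<in> ball_out H u p \<Longrightarrow> b \<in> ball_out H a n \<Longrightarrow> b \<in> ball_out H u (p+n)"
  unfolding ball_out_def
proof clarify
  fix k k' assume "k \<le> p" "(u,a) \<in> H ^^ k" "k' \<le> n" "(a,b) \<in> H ^^ k'"
  from \<open>(u,a) \<in> H ^^ k\<close> \<open>(a,b) \<in> H ^^ k'\<close> have "(u,b) \<in> H ^^ (k+k')" by (rule relpow_trans)
  then show "\<exists>k\<le>p + n. (u, b) \<in> H ^^ k" using \<open>k \<le> p\<close> \<open>k' \<le> n\<close> by (intro exI[of _ "k+k'"]) simp
qed

lemma ball_mono: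
  fixes H :: "('a \<times> 'a) set"
  assumes "H \<subseteq> H'" "p \<le> p'" "x \<in> ball_out H u p"
  shows "x \<in> ball_out H' u p'"
proof -
  from assms(3) obtain k where "k \<le> p" "(u,x) \<in> H ^^ k" unfolding ball_out_def by blast
  then have "(u,x) \<in> H' ^^ k" using relpow_mono_sub[OF assms(1)] by blast
  then show ?thesis unfolding ball_out_def using \<open>k \<le> p\<close> assms(2) by (intro CollectI exI[of _ k]) simp
qed

lemma ball_arc: "(u,w) \<in> H \<Longrightarrow> w \<in> ball_out H u 1"
  unfolding ball_out_def by (intro CollectI exI[of _ 1]) simp

lemma ball_self: "u \<in> ball_out H u p"
  unfolding ball_out_def by (intro CollectI exI[of _ 0]) simp

definition subg :: "'a set \<Rightarrow> ('a \<times> 'a) set \<Rightarrow> (nat \<Rightarrow> 'a \<Rightarrow> nat) \<Rightarrow> nat \<Rightarrow> nat \<Rightarrow> 'a graph" where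
  "subg V E anc d l = ({w \<in> V. anc d w = l}, {(x,y) \<in> E. anc d x = l \<and> anc d y = l})"


locale step =
  fixes V :: "'a set" and E :: "('a \<times> 'a) set" and anc :: "nat \<Rightarrow> 'a \<Rightarrow> nat"
    and col :: "'a \<Rightarrow> nat" and S :: "nat \<Rightarrow> (nat \<times> nat) set"
    and d m r c :: nat and HQ :: "nat \<Rightarrow> ('a \<times> 'a) set"
  assumes finV: "finite V" and Esub: "E \<subseteq> V \<times> V"
    and Esym: "\<And>x y. (x,y) \<in> E \<Longrightarrow> (y,x) \<in> E" and Eirr: "\<And>x. (x,x) \<notin> E"
    and tree: "tree_anc V (Suc d) anc"
    and colr: "\<And>v. v \<in> V \<Longrightarrow> col v \<in> {1..m}"
    and model: "\<And>u v. u \<in> V \<Longrightarrow> v \<in> V \<Longrightarrow> u \<noteq> v \<Longrightarrow>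
       ((u,v) \<in> E \<longleftrightarrow> (col u, col v) \<in> S (tree_half_dist anc u v))"
    and HQ: "\<And>l. l \<in> anc d ` V \<Longrightarrow> weak_guidance_system (subg V E anc d l) r (HQ l)
       \<and> max_outdegree_le (subg V E anc d l) (HQ l) c"
begin

abbreviation part where "part z \<equiv> anc d z"

definition EP where "EP = E \<inter> {(x,y). anc d x = anc d y}"

lemma EP_iff: "(x,y) \<in> EP \<longleftrightarrow> (x,y) \<in> E \<and> anc d x = anc d y"
  unfolding EP_def by simp

lemma tree_inj: "inj_on (anc 0) V"
  using tree unfolding tree_anc_def by (elim conjE)

lemma tree_top: "u \<in> V \<Longrightarrow> v \<in> V \<Longrightarrow> anc (Suc d) u = anc (Suc d) v"
  using tree unfolding tree_anc_def by (elim conjE) blast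

lemma tree_step: "i < Suc d \<Longrightarrow> u \<in> V \<Longrightarrow> v \<in> V \<Longrightarrow> anc i u = anc i v \<Longrightarrow> anc (Suc i) u = anc (Suc i) v"
  using tree unfolding tree_anc_def by (elim conjE) blast

lemma anc_mono:
  assumes "u \<in> V" "v \<in> V" "i \<le> j" "j \<le> Suc d" "anc i u = anc i v"
  shows "anc j u = anc j v"
  using assms(3,4)
proof (induction j)
  case 0 then show ?case using assms by simp
next
  case (Suc j)
  show ?case
  proof (cases "i = Suc j")
    case True then show ?thesis using assms by simp
  next
    case False
    then have "anc j u = anc j v" using Suc by simp
    moreover have "j < Suc d" using Suc.prems by simp
    ultimately show ?thesis using tree_step assms(1,2) by blast
  qed
qed

lemma cross_hd:
  assumes "u \<in> V" "v \<in> V" "part u \<noteq> part v"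
  shows "tree_half_dist anc u v = Suc d"
  unfolding tree_half_dist_def
proof (rule Least_equality)
  show "anc (Suc d) u = anc (Suc d) v" using tree_top assms by blast
next
  fix y assume "anc y u = anc y v"
  show "Suc d \<le> y"
  proof (rule ccontr)
    assume "\<not> Suc d \<le> y"
    then have "y \<le> d" by simp
    then have "anc d u = anc d v" using anc_mono[OF assms(1,2), of y d] \<open>anc y u = anc y v\<close> by simp
    then show False using assms by simp
  qed
qed

lemma cross_edge:
  assumes "u \<in> V" "w \<in> V" "part u \<noteq> part w"
  shows "(u,w) \<in> E \<longleftrightarrow> (col u, col w) \<in> S (Suc d)"
proof -
  have "u \<noteq> w" using assms by auto
  then show ?thesis using model[OF assms(1,2)] cross_hd[OF assms] by simp
qed

lemma EP_sub: "EP \<subseteq> E" unfolding EP_def by (rule Int_lower1)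

lemma EP_sym: "(x,y) \<in> EP \<Longrightarrow> (y,x) \<in> EP" unfolding EP_iff using Esym by simp

lemma EP_pow: "(a,b) \<in> EP ^^ n \<Longrightarrow> a \<in> V \<Longrightarrow> b \<in> V \<and> part b = part a"
proof (induction n arbitrary: b)
  case 0 then show ?case by simp
next
  case (Suc n)
  from Suc.prems(1) obtain y where y: "(a,y) \<in> EP ^^ n" "(y,b) \<in> EP" by (rule relpow_Suc_E)
  have "y \<in> V \<and> part y = part a" using Suc.IH[OF y(1) Suc.prems(2)] .
  moreover have "b \<in> V" "part b = part y" using y(2) Esub unfolding EP_iff by auto
  ultimately show ?case by simp
qed

definition reach where "reach z k \<longleftrightarrow> (\<exists>n w. col w = k \<and> (z,w) \<in> EP ^^ n)"
definition distP where "distP z k = (LEAST n. \<exists>w. col w = k \<and> (z,w) \<in> EP ^^ n)"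
definition bfs where "bfs z k = (SOME z'. (z,z') \<in> EP \<and> (\<exists>w. col w = k \<and> (z',w) \<in> EP ^^ (distP z k - 1)))"
definition Hbfs where "Hbfs = {(z,z'). \<exists>k\<in>{1..m}. reach z k \<and> 0 < distP z k \<and> z' = bfs z k}"

lemma distP_ex: "reach z k \<Longrightarrow> \<exists>w. col w = k \<and> (z,w) \<in> EP ^^ (distP z k)"
  unfolding reach_def distP_def by (elim exE, rule LeastI_ex, blast)

lemma bfs_step:
  assumes "reach z k" "distP z k = Suc D"
  shows "(z, bfs z k) \<in> EP \<and> (\<exists>w. col w = k \<and> (bfs z k, w) \<in> EP ^^ D)"
proof -
  from distP_ex[OF assms(1)] obtain w where w: "col w = k" "(z,w) \<in> EP ^^ distP z k"
    by (elim exE conjE)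
  from w(2) have "(z,w) \<in> EP ^^ Suc D" by (simp only: assms(2))
  then obtain y where y: "(z,y) \<in> EP" "(y,w) \<in> EP ^^ D" by (rule relpow_Suc_E2)
  have "(y,w) \<in> EP ^^ (distP z k - 1)" using y(2) by (simp only: assms(2) diff_Suc_1)
  then have "\<exists>z'. (z,z') \<in> EP \<and> (\<exists>w. col w = k \<and> (z',w) \<in> EP ^^ (distP z k - 1))"
    using y(1) w(1) by (intro exI conjI)
  then have "(z, bfs z k) \<in> EP \<and> (\<exists>w. col w = k \<and> (bfs z k, w) \<in> EP ^^ (distP z k - 1))"
    unfolding bfs_def by (rule someI_ex)
  then show ?thesis using assms(2) by simp
qed

lemma Hbfs_sub: "Hbfs \<subseteq> EP"
proof
  fix p assume "p \<in> Hbfs"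
  then obtain z z' k where p: "p = (z,z')" "reach z k" "0 < distP z k" "z' = bfs z k"
    unfolding Hbfs_def by auto
  then obtain D where "distP z k = Suc D" using gr0_implies_Suc by blast
  then show "p \<in> EP" using bfs_step p by auto
qed

lemma bfs_reach:
  "k \<in> {1..m} \<Longrightarrow> col w = k \<Longrightarrow> (z,w) \<in> EP ^^ n \<Longrightarrow>
   \<exists>b j. j \<le> n \<and> col b = k \<and> (z,b) \<in> Hbfs ^^ j \<and> (z,b) \<in> EP ^^ j"
proof (induction n arbitrary: z w rule: less_induct)
  case (less n)
  have re: "reach z k" using less.prems unfolding reach_def by blast
  have Dle: "distP z k \<le> n" unfolding distP_def using less.prems by (intro Least_le) blast
  show ?case
  proof (cases "distP z k")
    case 0
    then obtain w0 where "col w0 = k" "(z,w0) \<in> EP ^^ 0" using distP_ex[OF re] by auto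
    then show ?thesis by (intro exI[of _ z] exI[of _ 0]) auto
  next
    case (Suc D)
    from bfs_step[OF re Suc] obtain w' where st: "(z, bfs z k) \<in> EP" "col w' = k" "(bfs z k, w') \<in> EP ^^ D"
      by auto
    have arc: "(z, bfs z k) \<in> Hbfs" unfolding Hbfs_def using less.prems re Suc by auto
    have "D < n" using Dle Suc by simp
    from less.IH[OF this less.prems(1) st(2,3)] obtain b j where
      bj: "j \<le> D" "col b = k" "(bfs z k, b) \<in> Hbfs ^^ j" "(bfs z k, b) \<in> EP ^^ j" by blast
    have "(z,b) \<in> Hbfs ^^ Suc j" using arc bj(3) by (rule relpow_Suc_I2)
    moreover have "(z,b) \<in> EP ^^ Suc j" using st(1) bj(4) by (rule relpow_Suc_I2)
    ultimately show ?thesis using bj \<open>D < n\<close> by (intro exI[of _ b] exI[of _ "Suc j"]) auto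
  qed
qed


definition W where "W cc k \<delta> = {a \<in> V. col a = cc \<and> (\<exists>n\<le>\<delta>. \<exists>w. col w = k \<and> (a,w) \<in> EP ^^ n)}"
definition Lab where "Lab z cc k \<delta> = part ` {w \<in> W cc k \<delta>. part w \<noteq> part z}"
definition Lsel where "Lsel z cc k \<delta> = (SOME L. L \<subseteq> Lab z cc k \<delta> \<and> card L \<le> r + 2 \<and>
   (L = Lab z cc k \<delta> \<or> card L = r + 2))"
definition repv where "repv cc k \<delta> l = (SOME w. w \<in> W cc k \<delta> \<and> part w = l)"
definition Reps where "Reps z cc k \<delta> = repv cc k \<delta> ` Lsel z cc k \<delta>"
definition Hrep where "Hrep = {(z,w). (z,w) \<in> E \<and> (\<exists>cc\<in>{1..m}. \<exists>k\<in>{1..m}. \<exists>\<delta>\<in>{..r}. w \<in> Reps z cc k \<delta>)}"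

lemma W_sub: "W cc k \<delta> \<subseteq> V" unfolding W_def by auto

lemma Lab_fin: "finite (Lab z cc k \<delta>)"
proof -
  have "{w \<in> W cc k \<delta>. part w \<noteq> part z} \<subseteq> V" using W_sub by auto
  then have "finite {w \<in> W cc k \<delta>. part w \<noteq> part z}" using finV finite_subset by auto
  then show ?thesis unfolding Lab_def by (rule finite_imageI)
qed

lemma Lsel_prop: "Lsel z cc k \<delta> \<subseteq> Lab z cc k \<delta> \<and> card (Lsel z cc k \<delta>) \<le> r + 2 \<and>
   (Lsel z cc k \<delta> = Lab z cc k \<delta> \<or> card (Lsel z cc k \<delta>) = r + 2)"
  unfolding Lsel_def
proof (rule someI_ex)
  show "\<exists>L. L \<subseteq> Lab z cc k \<delta> \<and> card L \<le> r + 2 \<and> (L = Lab z cc k \<delta> \<or> card L = r + 2)"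
  proof (cases "card (Lab z cc k \<delta>) \<le> r + 2")
    case True then show ?thesis by (intro exI[of _ "Lab z cc k \<delta>"]) simp
  next
    case False
    then obtain T where "T \<subseteq> Lab z cc k \<delta>" "card T = r + 2"
      using obtain_subset_with_card_n[of "r+2" "Lab z cc k \<delta>"] by force
    then show ?thesis by (intro exI[of _ T]) simp
  qed
qed

lemma Lsel_fin: "finite (Lsel z cc k \<delta>)"
  using Lsel_prop Lab_fin finite_subset by metis

lemma card_Reps: "card (Reps z cc k \<delta>) \<le> r + 2"
proof -
  have "card (Reps z cc k \<delta>) \<le> card (Lsel z cc k \<delta>)" unfolding Reps_def by (rule card_image_le[OF Lsel_fin])
  then show ?thesis using Lsel_prop by (meson order_trans)
qed

lemma rep_exists:
  assumes b: "b \<in> V" and cc: "cc \<in> {1..m}" and k: "k \<in> {1..m}" and dl: "\<delta> \<le> r"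
    and x': "x' \<in> W cc k \<delta>" and px: "part x' \<noteq> part b" and S: "(col b, cc) \<in> S (Suc d)"
    and PL: "finite PL" "card PL < r + 2"
  shows "\<exists>a'. (b,a') \<in> Hrep \<and> a' \<in> W cc k \<delta> \<and> (part a' = part x' \<or> part a' \<notin> PL)"
proof -
  have lab: "part x' \<in> Lab b cc k \<delta>" unfolding Lab_def using x' px by auto
  obtain l where l: "l \<in> Lsel b cc k \<delta>" "l = part x' \<or> l \<notin> PL"
  proof (cases "Lsel b cc k \<delta> = Lab b cc k \<delta>")
    case True then show ?thesis using that lab by auto
  next
    case False
    then have cN: "card (Lsel b cc k \<delta>) = r + 2" using Lsel_prop[of b cc k \<delta>] by argo
    have "\<not> Lsel b cc k \<delta> \<subseteq> PL"
    proof
      assume "Lsel b cc k \<delta> \<subseteq> PL"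
      then have "card (Lsel b cc k \<delta>) \<le> card PL" using PL(1) by (rule card_mono[rotated])
      then show False using cN PL(2) by simp
    qed
    then obtain l where "l \<in> Lsel b cc k \<delta>" "l \<notin> PL" by auto
    then show ?thesis using that by auto
  qed
  have "Lsel b cc k \<delta> \<subseteq> Lab b cc k \<delta>" using Lsel_prop[of b cc k \<delta>] by simp
  then have "l \<in> Lab b cc k \<delta>" using l(1) by (rule subsetD)
  then obtain w where w: "w \<in> W cc k \<delta>" "part w \<noteq> part b" "part w = l" unfolding Lab_def by auto
  define a' where "a' = repv cc k \<delta> l"
  have "a' \<in> W cc k \<delta> \<and> part a' = l" unfolding a'_def repv_def
    by (rule someI[of _ w]) (use w in simp)
  then have a': "a' \<in> W cc k \<delta>" "part a' = l" by auto
  have a'V: "a' \<in> V" and ca: "col a' = cc" using a'(1) unfolding W_def by auto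
  have "part b \<noteq> part a'" using a'(2) w by simp
  then have "(b,a') \<in> E" using cross_edge[OF b a'V] S ca by simp
  moreover have "a' \<in> Reps b cc k \<delta>" unfolding Reps_def a'_def using l(1) by simp
  ultimately have "(b,a') \<in> Hrep" unfolding Hrep_def using cc k dl
    by (simp only: mem_Collect_eq case_prod_conv) (intro conjI bexI[of _ cc] bexI[of _ k] bexI[of _ \<delta>], auto)
  then show ?thesis using a' l(2) by auto
qed


definition Hrec where "Hrec = {(z,w). z \<in> V \<and> (z,w) \<in> HQ (part z)}"
definition HH where "HH = Hrec \<union> Hbfs \<union> Hrep"

lemma edges_subg: "edges (subg V E anc d l) = {(a,b) \<in> E. part a = l \<and> part b = l}"
  unfolding subg_def edges_def by simp

lemma verts_subg: "verts (subg V E anc d l) = {w \<in> V. part w = l}"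
  unfolding subg_def verts_def by simp

lemma HQ_sub: "l \<in> part ` V \<Longrightarrow> HQ l \<subseteq> edges (subg V E anc d l)"
  using HQ unfolding weak_guidance_system_def partial_orientation_def by simp

lemma Hrec_sub: "Hrec \<subseteq> E"
proof
  fix p assume "p \<in> Hrec"
  then obtain z w where p: "p = (z,w)" "z \<in> V" "(z,w) \<in> HQ (part z)" unfolding Hrec_def by auto
  have "part z \<in> part ` V" using p(2) by simp
  then have "(z,w) \<in> edges (subg V E anc d (part z))" using HQ_sub p(3) by auto
  then show "p \<in> E" using p(1) unfolding edges_subg by simp
qed

lemma Hrep_sub: "Hrep \<subseteq> E" unfolding Hrep_def by auto

lemma HH_sub: "HH \<subseteq> E"
  unfolding HH_def using Hrec_sub Hrep_sub Hbfs_sub EP_sub by auto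

lemma outdeg:
  assumes zV: "z \<in> V"
  shows "card {w. (z,w) \<in> HH} \<le> c + m + m * m * (r + 1) * (r + 2)"
proof -
  define A1 where "A1 = {w. (z,w) \<in> Hrec}"
  define A2 where "A2 = {w. (z,w) \<in> Hbfs}"
  define A3 where "A3 = {w. (z,w) \<in> Hrep}"
  have split: "{w. (z,w) \<in> HH} = A1 \<union> A2 \<union> A3" unfolding HH_def A1_def A2_def A3_def by auto
  have c1: "card A1 \<le> c"
  proof -
    have "part z \<in> part ` V" using zV by simp
    from HQ[OF this] have "max_outdegree_le (subg V E anc d (part z)) (HQ (part z)) c" by simp
    moreover have "z \<in> verts (subg V E anc d (part z))" unfolding verts_subg using zV by simp
    ultimately have "card {w. (z,w) \<in> HQ (part z)} \<le> c" unfolding max_outdegree_le_def by simp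
    moreover have "A1 = {w. (z,w) \<in> HQ (part z)}" unfolding A1_def Hrec_def using zV by simp
    ultimately show ?thesis by simp
  qed
  have c2: "card A2 \<le> m"
  proof -
    have "A2 \<subseteq> bfs z ` {1..m}" unfolding A2_def Hbfs_def by auto
    then have "card A2 \<le> card (bfs z ` {1..m})" by (rule card_mono[rotated]) simp
    also have "\<dots> \<le> card {1..m}" by (rule card_image_le) simp
    finally show ?thesis by simp
  qed
  define K where "K = {1..m} \<times> {1..m} \<times> {..r}"
  define F where "F = (\<lambda>t::nat \<times> nat \<times> nat. Reps z (fst t) (fst (snd t)) (snd (snd t)))"
  have c3: "card A3 \<le> m * m * (r + 1) * (r + 2)"
  proof -
    have fK: "finite K" unfolding K_def by simp
    have "A3 \<subseteq> (\<Union>t\<in>K. F t)" unfolding A3_def Hrep_def K_def F_def by force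
    moreover have "finite (\<Union>t\<in>K. F t)" using fK unfolding F_def Reps_def
      by (intro finite_UN_I) (auto intro: finite_imageI Lsel_fin)
    ultimately have "card A3 \<le> card (\<Union>t\<in>K. F t)" by (rule card_mono[rotated])
    also have "\<dots> \<le> (\<Sum>t\<in>K. card (F t))" by (rule card_UN_le[OF fK])
    also have "\<dots> \<le> of_nat (card K) * (r + 2)" by (rule sum_bounded_above) (unfold F_def, rule card_Reps)
    also have "card K = m * m * (r + 1)" unfolding K_def by (simp add: card_cartesian_product algebra_simps)
    finally show ?thesis by simp
  qed
  have "card {w. (z,w) \<in> HH} \<le> card (A1 \<union> A2) + card A3" unfolding split by (rule card_Un_le)
  also have "\<dots> \<le> card A1 + card A2 + card A3" using card_Un_le[of A1 A2] by simp
  finally show ?thesis using c1 c2 c3 by simp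
qed


lemma guidance:
  assumes uV: "u \<in> V" and vV: "v \<in> V" and uv: "u \<noteq> v" and lr: "l \<le> r"
    and dist1: "(u,v) \<in> E ^^ l" and dist2: "\<forall>k<l. (u,v) \<notin> E ^^ k"
  shows "\<exists>a b. a + b = l - 1 \<and> (\<exists>x\<in>ball_out HH u a. \<exists>y\<in>ball_out HH v b. (x,y) \<in> E)"
proof -
  obtain x where x0: "x 0 = u" and xl: "x l = v" and xs': "\<forall>i<l. (x i, x (Suc i)) \<in> E"
    using dist1 unfolding relpow_fun_conv by (elim exE conjE)
  have xs: "\<And>i. i < l \<Longrightarrow> (x i, x (Suc i)) \<in> E" using xs' by simp
  have xV: "\<And>i. i \<le> l \<Longrightarrow> x i \<in> V"
  proof -
    fix i assume "i \<le> l"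
    show "x i \<in> V"
    proof (cases "i = l")
      case True then show ?thesis using xl vV by simp
    next
      case False
      then have "(x i, x (Suc i)) \<in> E" using xs \<open>i \<le> l\<close> by simp
      then show ?thesis using Esub by auto
    qed
  qed
  have l0: "0 < l"
  proof (rule ccontr)
    assume "\<not> 0 < l"
    then have "l = 0" by simp
    then show False using dist1 uv by simp
  qed
  define Pe where "Pe e \<longleftrightarrow> (\<forall>i. e \<le> i \<longrightarrow> i \<le> l \<longrightarrow> part (x i) = part v)" for e
  define e where "e = (LEAST e. Pe e)"
  have Pl: "Pe l" unfolding Pe_def using xl by auto
  have eP: "\<And>i. e \<le> i \<Longrightarrow> i \<le> l \<Longrightarrow> part (x i) = part v"
  proof -
    have "Pe e" unfolding e_def using Pl by (rule LeastI)
    then show "\<And>i. e \<le> i \<Longrightarrow> i \<le> l \<Longrightarrow> part (x i) = part v" unfolding Pe_def by simp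
  qed
  have el: "e \<le> l" unfolding e_def using Pl by (rule Least_le)
  show ?thesis
  proof (cases "e = 0")
    case True
    define G' where "G' = subg V E anc d (part v)"
    have allp: "\<And>i. i \<le> l \<Longrightarrow> part (x i) = part v" using eP True by simp
    have "(x 0, x l) \<in> edges G' ^^ (l - 0)"
    proof (rule path_relpow)
      fix i assume "0 \<le> i" "i < l"
      then show "(x i, x (Suc i)) \<in> edges G'" unfolding G'_def edges_subg using xs allp by simp
    qed simp
    then have p1: "(u,v) \<in> edges G' ^^ l" using x0 xl by simp
    have esub: "edges G' \<subseteq> E" unfolding G'_def edges_subg by auto
    have p2: "\<forall>k<l. (u,v) \<notin> edges G' ^^ k" using dist2 relpow_mono_sub[OF esub] by metis
    have gd: "graph_dist_is G' u v l" unfolding graph_dist_is_def using p1 p2 by simp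
    have "part v \<in> part ` V" using vV by simp
    from HQ[OF this] have wg: "weak_guidance_system G' r (HQ (part v))" unfolding G'_def by simp
    have uG: "u \<in> verts G'" using allp[of 0] x0 uV unfolding G'_def verts_subg by simp
    have vG: "v \<in> verts G'" using vV unfolding G'_def verts_subg by simp
    define HV where "HV = HQ (part v)"
    from wg have "\<forall>u\<in>verts G'. \<forall>v\<in>verts G'. \<forall>l. u \<noteq> v \<and> l \<le> r \<and> graph_dist_is G' u v l \<longrightarrow>
        (\<exists>a b. a + b = l - 1 \<and>
           (\<exists>x\<in>ball_out HV u a. \<exists>y\<in>ball_out HV v b. (x, y) \<in> edges G'))"
      unfolding weak_guidance_system_def HV_def by simp
    then have "\<exists>a b. a + b = l - 1 \<and>
           (\<exists>x\<in>ball_out (HV) u a. \<exists>y\<in>ball_out (HV) v b. (x, y) \<in> edges G')"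
      using uG vG uv lr gd by simp
    then obtain a b xx yy where ab: "a + b = l - 1" "xx \<in> ball_out (HV) u a"
      "yy \<in> ball_out (HV) v b" "(xx, yy) \<in> edges G'" by auto
    have hsub: "HV \<subseteq> HH"
    proof
      fix p assume "p \<in> HV"
      moreover have "HV \<subseteq> edges G'" unfolding G'_def HV_def using HQ_sub vV by simp
      ultimately have pin: "p \<in> {(a, b). (a, b) \<in> E \<and> part a = part v \<and> part b = part v}" "p \<in> HV"
        unfolding G'_def edges_subg by auto
      obtain z w where zw: "p = (z,w)" by (cases p)
      have "(z,w) \<in> HV" "z \<in> V" "part z = part v" using pin zw Esub by auto
      then show "p \<in> HH" unfolding HH_def Hrec_def HV_def zw by simp
    qed
    have "xx \<in> ball_out HH u a" by (rule ball_mono[OF hsub _ ab(2)]) simp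
    moreover have "yy \<in> ball_out HH v b" by (rule ball_mono[OF hsub _ ab(3)]) simp
    moreover have "(xx,yy) \<in> E" using ab(4) esub by auto
    ultimately show ?thesis using ab(1) by blast
  next
    case False
    note enz = False
    have cross: "part (x (e-1)) \<noteq> part v"
    proof
      assume h: "part (x (e-1)) = part v"
      have "Pe (e - 1)" unfolding Pe_def
      proof (intro allI impI)
        fix i assume "e - 1 \<le> i" "i \<le> l"
        show "part (x i) = part v"
        proof (cases "i = e - 1")
          case True then show ?thesis using h by simp
        next
          case False then show ?thesis using eP \<open>e - 1 \<le> i\<close> \<open>i \<le> l\<close> by simp
        qed
      qed
      then have "e \<le> e - 1" unfolding e_def by (rule Least_le)
      then show False using enz by simp
    qed
    have "(x e, x l) \<in> EP ^^ (l - e)"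
    proof (rule path_relpow)
      fix i assume "e \<le> i" "i < l"
      then show "(x i, x (Suc i)) \<in> EP" unfolding EP_iff using xs eP by simp
    qed (rule el)
    then have "(x l, x e) \<in> EP ^^ (l - e)" using relpow_sym[of EP] EP_sym by metis
    then have vxe: "(v, x e) \<in> EP ^^ (l - e)" using xl by simp
    have ke: "col (x e) \<in> {1..m}" using colr xV el by simp
    from bfs_reach[OF ke refl vxe] obtain y j where yj: "j \<le> l - e" "col y = col (x e)"
      "(v,y) \<in> Hbfs ^^ j" "(v,y) \<in> EP ^^ j" by (elim exE conjE)
    have yV: "y \<in> V" "part y = part v" using EP_pow[OF yj(4) vV] by auto
    have "y \<in> ball_out Hbfs v (l - e)" unfolding ball_out_def using yj(1,3) by (intro CollectI exI[of _ j]) simp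
    then have yball: "y \<in> ball_out HH v (l - e)" by (rule ball_mono[rotated 2]) (auto simp: HH_def)
    define PL where "PL = (\<lambda>i. part (x i)) ` {..l}"
    have PLf: "finite PL" unfolding PL_def by simp
    have "card PL \<le> card {..l}" unfolding PL_def by (rule card_image_le) simp
    then have PLc: "card PL < r + 2" using lr by simp
    have inPL: "part (x i) \<in> PL" if "i \<le> l" for i
      unfolding PL_def by (rule image_eqI[where x=i]) (use that in simp_all)
    define segend where "segend p q \<longleftrightarrow> p \<le> q \<and> q < l \<and> (\<forall>i. p \<le> i \<longrightarrow> i \<le> q \<longrightarrow> part (x i) = part (x p))
       \<and> part (x (Suc q)) \<noteq> part (x p)" for p q
    have segD: "p \<le> q" "q < l" "part (x (Suc q)) \<noteq> part (x p)"
      "\<And>i. p \<le> i \<Longrightarrow> i \<le> q \<Longrightarrow> part (x i) = part (x p)" if "segend p q" for p q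
    proof -
      from that have A: "p \<le> q \<and> q < l \<and> (\<forall>i. p \<le> i \<longrightarrow> i \<le> q \<longrightarrow> part (x i) = part (x p))
        \<and> part (x (Suc q)) \<noteq> part (x p)" unfolding segend_def .
      show "p \<le> q" using A by meson
      show "q < l" using A by meson
      show "part (x (Suc q)) \<noteq> part (x p)" using A by meson
      show "\<And>i. p \<le> i \<Longrightarrow> i \<le> q \<Longrightarrow> part (x i) = part (x p)" using A by meson
    qed
    have seg_ex: "\<exists>q. segend p q \<and> q < e" if pe: "p < e" for p
    proof -
      define P where "P j \<longleftrightarrow> p \<le> j \<and> j < l \<and> part (x (Suc j)) \<noteq> part (x p)" for j
      have exP: "\<exists>j. P j"
      proof (rule ccontr)
        assume "\<not> (\<exists>j. P j)"
        then have np: "\<And>j. p \<le> j \<Longrightarrow> j < l \<Longrightarrow> part (x (Suc j)) = part (x p)" unfolding P_def by auto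
        have np2: "part (x i) = part (x p)" if pi: "p \<le> i" "i \<le> l" for i
        proof (cases "i = p")
          case True then show ?thesis by simp
        next
          case False
          then obtain i' where "i = Suc i'" "p \<le> i'" "i' < l" using pi by (cases i) auto
          then show ?thesis using np by simp
        qed
        have "Pe p" unfolding Pe_def
        proof (intro allI impI)
          fix i assume "p \<le> i" "i \<le> l"
          have "p \<le> l" using pe el by simp
          then show "part (x i) = part v" using np2[OF \<open>p \<le> i\<close> \<open>i \<le> l\<close>] np2[of l] xl by simp
        qed
        then have "e \<le> p" unfolding e_def by (rule Least_le)
        then show False using pe by simp
      qed
      define q where "q = (LEAST j. P j)"
      have Pq: "P q" unfolding q_def using exP by (rule LeastI_ex)
      have minq: "\<not> P j" if "j < q" for j using that unfolding q_def by (rule not_less_Least)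
      have inseg: "\<forall>i. p \<le> i \<longrightarrow> i \<le> q \<longrightarrow> part (x i) = part (x p)"
      proof (intro allI impI)
        fix i assume "p \<le> i" "i \<le> q"
        show "part (x i) = part (x p)"
        proof (cases "i = p")
          case True then show ?thesis by simp
        next
          case False
          then obtain i' where i': "i = Suc i'" "p \<le> i'" "i' < q" using \<open>p \<le> i\<close> \<open>i \<le> q\<close> by (cases i) auto
          have "i' < l" using i'(3) Pq unfolding P_def by simp
          then show ?thesis using minq[OF i'(3)] i' unfolding P_def by simp
        qed
      qed
      have sq: "segend p q" unfolding segend_def
      proof (intro conjI)
        show "p \<le> q" "q < l" "part (x (Suc q)) \<noteq> part (x p)" using Pq unfolding P_def by simp_all
        show "\<forall>i. p \<le> i \<longrightarrow> i \<le> q \<longrightarrow> part (x i) = part (x p)" by (rule inseg)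
      qed
      have "q < e"
      proof (rule ccontr)
        assume "\<not> q < e"
        then have "e \<le> q" by simp
        have "q < l" using Pq unfolding P_def by simp
        then have "part (x q) = part v" "part (x (Suc q)) = part v" using eP \<open>e \<le> q\<close> by auto
        moreover have "part (x q) = part (x p)" using inseg Pq unfolding P_def by (meson order_refl)
        ultimately show False using Pq unfolding P_def by simp
      qed
      then show ?thesis using sq by auto
    qed
    have seg_uniq: "q1 = q2" if "segend p q1" "segend p q2" for p q1 q2
    proof (rule ccontr)
      assume "q1 \<noteq> q2"
      then consider "q1 < q2" | "q2 < q1" by linarith
      then show False
      proof cases
        case 1
        then have "p \<le> Suc q1" "Suc q1 \<le> q2" using segD(1)[OF that(1)] by simp_all
        then have "part (x (Suc q1)) = part (x p)" by (rule segD(4)[OF that(2)])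
        then show False using segD(3)[OF that(1)] by simp
      next
        case 2
        then have "p \<le> Suc q2" "Suc q2 \<le> q1" using segD(1)[OF that(2)] by simp_all
        then have "part (x (Suc q2)) = part (x p)" by (rule segD(4)[OF that(1)])
        then show False using segD(3)[OF that(2)] by simp
      qed
    qed
    have seg_path: "(x p, x q) \<in> EP ^^ (q - p)" if sg: "segend p q" for p q
    proof (rule path_relpow)
      fix i assume "p \<le> i" "i < q"
      then have "(x i, x (Suc i)) \<in> E" using xs segD(2)[OF sg] by simp
      moreover have "part (x i) = part (x p)" using segD(4)[OF sg, of i] \<open>p \<le> i\<close> \<open>i < q\<close> by simp
      moreover have "part (x (Suc i)) = part (x p)" using segD(4)[OF sg, of "Suc i"] \<open>p \<le> i\<close> \<open>i < q\<close> by simp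
      ultimately show "(x i, x (Suc i)) \<in> EP" unfolding EP_iff by simp
    qed (rule segD(1)[OF sg])
    have claim: "\<And>p a. e - p = n \<Longrightarrow> p < e \<Longrightarrow> a \<in> V \<Longrightarrow> a \<in> ball_out HH u p \<Longrightarrow> col a = col (x p) \<Longrightarrow>
       (part a = part (x p) \<or> part a \<notin> PL) \<Longrightarrow>
       (\<forall>q. segend p q \<longrightarrow> a \<in> W (col (x p)) (col (x q)) (q - p)) \<Longrightarrow>
       \<exists>b\<in>ball_out HH u (e-1). (b,y) \<in> E" for n
    proof (induction n rule: less_induct)
      case (less n p a)
      note pe = less.prems(2) and aV = less.prems(3) and aball = less.prems(4)
        and ca = less.prems(5) and pa = less.prems(6) and aW = less.prems(7)
      obtain q where sq: "segend p q" "q < e" using seg_ex[OF pe] by auto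
      have ql: "q < l" and pq: "p \<le> q" using segD(1,2)[OF sq(1)] by simp_all
      have "a \<in> W (col (x p)) (col (x q)) (q - p)" using aW sq(1) by simp
      then obtain n' w where nw: "n' \<le> q - p" "col w = col (x q)" "(a,w) \<in> EP ^^ n'"
        unfolding W_def by auto
      have kq: "col (x q) \<in> {1..m}" using colr xV ql by simp
      from bfs_reach[OF kq nw(2) nw(3)] obtain b j where bj: "j \<le> n'" "col b = col (x q)"
        "(a,b) \<in> Hbfs ^^ j" "(a,b) \<in> EP ^^ j" by (elim exE conjE)
      have bV: "b \<in> V" "part b = part a" using EP_pow[OF bj(4) aV] by auto
      have "j \<le> q - p" using bj(1) nw(1) by simp
      then have "b \<in> ball_out Hbfs a (q - p)" unfolding ball_out_def using bj(3) by (intro CollectI exI[of _ j]) simp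
      then have "b \<in> ball_out HH a (q - p)" by (rule ball_mono[rotated 2]) (auto simp: HH_def)
      from ball_trans[OF aball this] have bball: "b \<in> ball_out HH u q" using pq by simp
      have pbx: "part b \<noteq> part (x (Suc q))"
      proof
        assume h: "part b = part (x (Suc q))"
        from pa show False
        proof
          assume "part a = part (x p)"
          then show False using h bV(2) segD(3)[OF sq(1)] by simp
        next
          assume "part a \<notin> PL"
          moreover have "part (x (Suc q)) \<in> PL" using inPL ql by simp
          ultimately show False using h bV(2) by simp
        qed
      qed
      have xqV: "x q \<in> V" "x (Suc q) \<in> V" using xV ql by auto
      have "part (x q) = part (x p)" using segD(4)[OF sq(1), of q] pq by simp
      then have "part (x q) \<noteq> part (x (Suc q))" using segD(3)[OF sq(1)] by simp
      then have Sq: "(col (x q), col (x (Suc q))) \<in> S (Suc d)"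
        using cross_edge[OF xqV] xs[OF ql] by simp
      show ?case
      proof (cases "q = e - 1")
        case True
        then have sqe: "Suc q = e" using enz by simp
        have "part y \<noteq> part b" using yV(2) pbx eP[of "Suc q"] sqe el by simp
        then have "part b \<noteq> part y" by simp
        moreover have "(col b, col y) \<in> S (Suc d)" using Sq bj(2) yj(2) sqe by simp
        ultimately have "(b,y) \<in> E" using cross_edge[OF bV(1) yV(1)] by simp
        then show ?thesis using bball True by auto
      next
        case False
        then have p'e: "Suc q < e" using sq(2) by simp
        obtain q' where sq': "segend (Suc q) q'" "q' < e" using seg_ex[OF p'e] by auto
        have q'l: "q' < l" and pq': "Suc q \<le> q'" using segD(1,2)[OF sq'(1)] by simp_all
        define cc where "cc = col (x (Suc q))"
        define k where "k = col (x q')"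
        define \<delta> where "\<delta> = q' - Suc q"
        have ccr: "cc \<in> {1..m}" unfolding cc_def using colr xqV by simp
        have kr: "k \<in> {1..m}" unfolding k_def using colr xV q'l by simp
        have dr: "\<delta> \<le> r" unfolding \<delta>_def using q'l lr by simp
        have xW: "x (Suc q) \<in> W cc k \<delta>"
          unfolding W_def cc_def k_def \<delta>_def using xqV(2) seg_path[OF sq'(1)] by auto
        have Sb: "(col b, cc) \<in> S (Suc d)" using Sq bj(2) unfolding cc_def by simp
        have px: "part (x (Suc q)) \<noteq> part b" using pbx by simp
        from rep_exists[OF bV(1) ccr kr dr xW px Sb PLf PLc] obtain a' where
          a': "(b,a') \<in> Hrep" "a' \<in> W cc k \<delta>" "part a' = part (x (Suc q)) \<or> part a' \<notin> PL" by auto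
        have "(b,a') \<in> HH" using a'(1) unfolding HH_def by simp
        then have "a' \<in> ball_out HH b 1" by (rule ball_arc)
        from ball_trans[OF bball this] have a'ball: "a' \<in> ball_out HH u (Suc q)" by simp
        have a'V: "a' \<in> V" and ca': "col a' = col (x (Suc q))" using a'(2) unfolding W_def cc_def by auto
        have lt: "e - Suc q < n" using less.prems(1) pq p'e by simp
        show ?thesis
        proof (rule less.IH[OF lt refl p'e a'V a'ball ca' a'(3)])
          show "\<forall>q''. segend (Suc q) q'' \<longrightarrow> a' \<in> W (col (x (Suc q))) (col (x q'')) (q'' - Suc q)"
          proof (intro allI impI)
            fix q'' assume "segend (Suc q) q''"
            then have "q'' = q'" using seg_uniq sq'(1) by metis
            then show "a' \<in> W (col (x (Suc q))) (col (x q'')) (q'' - Suc q)"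
              using a'(2) unfolding cc_def k_def \<delta>_def by simp
          qed
        qed
      qed
    qed
    have "\<exists>b\<in>ball_out HH u (e-1). (b,y) \<in> E"
    proof (rule claim[OF refl, of 0 u])
      show "0 < e" using enz by simp
      show "u \<in> V" by (rule uV)
      show "u \<in> ball_out HH u 0" by (rule ball_self)
      show "col u = col (x 0)" using x0 by simp
      show "part u = part (x 0) \<or> part u \<notin> PL" using x0 by simp
      show "\<forall>q. segend 0 q \<longrightarrow> u \<in> W (col (x 0)) (col (x q)) (q - 0)"
      proof (intro allI impI)
        fix q assume sq: "segend 0 q"
        have "q < l" using segD(2)[OF sq] .
        then have "col (x q) = col (x q) \<and> (u, x q) \<in> EP ^^ (q - 0)" using seg_path[OF sq] x0 by simp
        then show "u \<in> W (col (x 0)) (col (x q)) (q - 0)" unfolding W_def using uV x0 by auto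
      qed
    qed
    then obtain b where b: "b \<in> ball_out HH u (e-1)" "(b,y) \<in> E" by auto
    have "(e - 1) + (l - e) = l - 1" using enz el by simp
    then show ?thesis using b yball by blast
  qed
qed


lemma main: "weak_guidance_system (V,E) r HH \<and> max_outdegree_le (V,E) HH (c + m + m * m * (r + 1) * (r + 2))"
proof -
  have po: "partial_orientation (V,E) HH" unfolding partial_orientation_def edges_def using HH_sub by simp
  have g: "\<forall>u\<in>verts (V,E). \<forall>v\<in>verts (V,E). \<forall>l. u \<noteq> v \<and> l \<le> r \<and> graph_dist_is (V,E) u v l \<longrightarrow>
        (\<exists>a b. a + b = l - 1 \<and>
           (\<exists>x\<in>ball_out HH u a. \<exists>y\<in>ball_out HH v b. (x, y) \<in> edges (V,E)))"
  proof (intro ballI allI impI)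
    fix u v l assume uV: "u \<in> verts (V,E)" and vV: "v \<in> verts (V,E)"
      and h: "u \<noteq> v \<and> l \<le> r \<and> graph_dist_is (V,E) u v l"
    have "u \<in> V" "v \<in> V" using uV vV unfolding verts_def by auto
    moreover have "(u,v) \<in> E ^^ l" "\<forall>k<l. (u,v) \<notin> E ^^ k"
      using h unfolding graph_dist_is_def edges_def by auto
    ultimately show "\<exists>a b. a + b = l - 1 \<and>
           (\<exists>x\<in>ball_out HH u a. \<exists>y\<in>ball_out HH v b. (x, y) \<in> edges (V,E))"
      using guidance h unfolding edges_def by simp
  qed
  have o: "max_outdegree_le (V,E) HH (c + m + m * m * (r + 1) * (r + 2))"
    unfolding max_outdegree_le_def verts_def using outdeg by simp
  show ?thesis using po g o unfolding weak_guidance_system_def by simp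
qed

end

lemma max_outdegree_mono: "max_outdegree_le G H c \<Longrightarrow> c \<le> c' \<Longrightarrow> max_outdegree_le G H c'"
  unfolding max_outdegree_le_def by (meson order_trans)

lemma induct_depth:
  fixes m r :: nat
  shows "\<exists>c. \<forall>G :: 'a graph. simple_graph G \<and> has_tree_model m d G \<longrightarrow>
           (\<exists>H. weak_guidance_system G r H \<and> max_outdegree_le G H c)"
proof (induction d)
  case 0
  show ?case
  proof (intro exI[of _ 0] allI impI)
    fix G :: "'a graph" assume h: "simple_graph G \<and> has_tree_model m 0 G"
    then have "has_tree_model m 0 G" by simp
    then have "\<exists>anc. tree_anc (verts G) 0 anc" unfolding has_tree_model_def
      apply - apply (elim exE conjE) apply (rule exI) apply assumption done
    then obtain anc where ta: "tree_anc (verts G) 0 anc" by (rule exE)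
    have inj: "inj_on (anc 0) (verts G)" using ta unfolding tree_anc_def by (rule conjunct1)
    have cst: "\<forall>u\<in>verts G. \<forall>v\<in>verts G. anc 0 u = anc 0 v"
      using ta unfolding tree_anc_def by (rule conjunct1[OF conjunct2])
    have eq: "u = v" if "u \<in> verts G" "v \<in> verts G" for u v
    proof -
      have "anc 0 u = anc 0 v" using bspec[OF bspec[OF cst that(1)] that(2)] .
      from inj_onD[OF inj this that] show ?thesis .
    qed
    have "weak_guidance_system G r {}"
      unfolding weak_guidance_system_def partial_orientation_def using eq by auto
    moreover have "max_outdegree_le G {} 0" unfolding max_outdegree_le_def by simp
    ultimately show "\<exists>H. weak_guidance_system G r H \<and> max_outdegree_le G H 0" by auto
  qed
next
  case (Suc d)
  then obtain c where IH: "\<And>G :: 'a graph. simple_graph G \<Longrightarrow> has_tree_model m d G \<Longrightarrow>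
           (\<exists>H. weak_guidance_system G r H \<and> max_outdegree_le G H c)" by auto
  show ?case
  proof (intro exI[of _ "c + m + m * m * (r + 1) * (r + 2)"] allI impI)
    fix G :: "'a graph" assume h: "simple_graph G \<and> has_tree_model m (Suc d) G"
    define V where "V = verts G"
    define E where "E = edges G"
    have G: "G = (V,E)" unfolding V_def E_def verts_def edges_def by simp
    obtain anc col S where ta: "tree_anc V (Suc d) anc" and cr: "\<forall>v\<in>V. col v \<in> {1..m}"
      and sg: "signature m S" and md: "\<forall>u\<in>V. \<forall>v\<in>V. u \<noteq> v \<longrightarrow>
        ((u, v) \<in> E \<longleftrightarrow> (col u, col v) \<in> S (tree_half_dist anc u v))"
      using h unfolding has_tree_model_def V_def E_def by blast
    have sgG: "finite V" "E \<subseteq> V \<times> V" "\<And>x y. (x,y) \<in> E \<Longrightarrow> (y,x) \<in> E" "\<And>x. (x,x) \<notin> E"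
      using h unfolding simple_graph_def V_def E_def by auto
    define HQ where "HQ l = (SOME H. weak_guidance_system (subg V E anc d l) r H
        \<and> max_outdegree_le (subg V E anc d l) H c)" for l
    have HQp: "weak_guidance_system (subg V E anc d l) r (HQ l) \<and> max_outdegree_le (subg V E anc d l) (HQ l) c"
      if "l \<in> anc d ` V" for l
    proof -
      define V' where "V' = {w \<in> V. anc d w = l}"
      define E' where "E' = {(a,b) \<in> E. anc d a = l \<and> anc d b = l}"
      have sub: "subg V E anc d l = (V',E')" unfolding subg_def V'_def E'_def by simp
      have vs: "verts (V',E') = V'" "edges (V',E') = E'" unfolding verts_def edges_def by simp_all
      have "simple_graph (V',E')" unfolding simple_graph_def vs
      proof (intro conjI allI impI)
        show "finite V'" unfolding V'_def using sgG(1) by simp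
        show "E' \<subseteq> V' \<times> V'" unfolding V'_def E'_def using sgG(2) by auto
        fix u v assume "(u,v) \<in> E'" then show "(v,u) \<in> E'" unfolding E'_def using sgG(3) by auto
      next
        fix u show "(u,u) \<notin> E'" unfolding E'_def using sgG(4) by auto
      qed
      moreover have "has_tree_model m d (V',E')" unfolding has_tree_model_def vs
      proof (intro exI conjI)
        show "tree_anc V' d anc" unfolding tree_anc_def
        proof (intro conjI ballI allI impI)
          show "inj_on (anc 0) V'" using ta unfolding tree_anc_def V'_def by (auto intro: inj_on_subset)
        next
          fix u v assume "u \<in> V'" "v \<in> V'" then show "anc d u = anc d v" unfolding V'_def by simp
        next
          fix i u v assume "i < d" "u \<in> V'" "v \<in> V'" "anc i u = anc i v"
          then show "anc (Suc i) u = anc (Suc i) v" using ta unfolding tree_anc_def V'_def by auto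
        qed
        show "\<forall>v\<in>V'. col v \<in> {1..m}" using cr unfolding V'_def by auto
        show "signature m S" by (rule sg)
        show "\<forall>u\<in>V'. \<forall>v\<in>V'. u \<noteq> v \<longrightarrow> ((u, v) \<in> E' \<longleftrightarrow> (col u, col v) \<in> S (tree_half_dist anc u v))"
          using md unfolding V'_def E'_def by auto
      qed
      ultimately have "\<exists>H. weak_guidance_system (subg V E anc d l) r H \<and> max_outdegree_le (subg V E anc d l) H c"
        using IH unfolding sub by simp
      then show ?thesis unfolding HQ_def by (rule someI_ex)
    qed
    interpret st: step V E anc col S d m r c HQ
    proof (unfold_locales)
      show "finite V" "E \<subseteq> V \<times> V" by (fact sgG(1), fact sgG(2))
      show "\<And>x y. (x,y) \<in> E \<Longrightarrow> (y,x) \<in> E" by (fact sgG(3))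
      show "\<And>x. (x,x) \<notin> E" by (fact sgG(4))
      show "tree_anc V (Suc d) anc" by (fact ta)
      show "\<And>v. v \<in> V \<Longrightarrow> col v \<in> {1..m}" using cr by simp
      show "\<And>u v. u \<in> V \<Longrightarrow> v \<in> V \<Longrightarrow> u \<noteq> v \<Longrightarrow>
       ((u,v) \<in> E \<longleftrightarrow> (col u, col v) \<in> S (tree_half_dist anc u v))" using md by simp
      show "\<And>l. l \<in> anc d ` V \<Longrightarrow> weak_guidance_system (subg V E anc d l) r (HQ l)
       \<and> max_outdegree_le (subg V E anc d l) (HQ l) c" by (rule HQp)
    qed
    show "\<exists>H. weak_guidance_system G r H \<and> max_outdegree_le G H (c + m + m * m * (r + 1) * (r + 2))"
      unfolding G using st.main by blast
  qed
qed

theorem lemma8: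
  fixes \<C> :: "'a graph set" and r :: nat
  assumes "\<forall>G\<in>\<C>. simple_graph G"
    and "bounded_shrub_depth \<C>"
    and "r > 0"
  shows "\<exists>c>0. \<forall>G\<in>\<C>. \<exists>H. weak_guidance_system G r H \<and> max_outdegree_le G H c"
proof -
  obtain d m where dm: "\<forall>G\<in>\<C>. has_tree_model m d G"
    using assms(2) unfolding bounded_shrub_depth_def by auto
  obtain c where c: "\<forall>G :: 'a graph. simple_graph G \<and> has_tree_model m d G \<longrightarrow>
           (\<exists>H. weak_guidance_system G r H \<and> max_outdegree_le G H c)"
    using induct_depth[of m d r] by auto
  show ?thesis
  proof (intro exI[of _ "max c 1"] conjI ballI)
    show "0 < max c 1" by simp
    fix G assume "G \<in> \<C>"
    then have "simple_graph G \<and> has_tree_model m d G" using assms(1) dm by simp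
    with spec[OF c, of G] have "\<exists>H. weak_guidance_system G r H \<and> max_outdegree_le G H c" by (rule mp)
    then obtain H where "weak_guidance_system G r H" "max_outdegree_le G H c" by (elim exE conjE)
    then show "\<exists>H. weak_guidance_system G r H \<and> max_outdegree_le G H (max c 1)"
      using max_outdegree_mono[of G H c "max c 1"] by auto
  qed
qed

end
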